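(* The measure $E_2$ is not monogamous. Explicitly: let $\mathcal H^A=\mathbb C^3$, $\mathcal H^B=\mathbb C^4$, $\mathcal H^C=\mathbb C^2$, and let real numbers $a_0,a_1,a_2,a_0',a_1',a_2'\ge 0$ satisfy $a_0^2=a_0'^2\ge \tfrac12$, $a_0>a_1\ge a_2$, $a_0'>a_1'\ge a_2'$, $\sum_i a_i^2=\sum_i a_i'^2=1$, and $a_1'a_2\neq a_1a_2'$. Put $$|\psi_0\rangle^{AB}=a_0|0\rangle|0\rangle+a_1|1\rangle|1\rangle+a_2|2\rangle|2\rangle,\qquad |\psi_1\rangle^{AB}=a_0'|0\rangle|3\rangle+a_1'|1\rangle|2\rangle+a_2'|2\rangle|1\rangle,$$ $$|\Phi\rangle^{ABC}=\tfrac{1}{\sqrt2}\big(|\psi_0\rangle^{AB}|0\rangle^C+|\psi_1\rangle^{AB}|1\rangle^C\big),$$ and let $\rho^{AB}=\mathrm{tr}_C|\Phi\rangle\langle\Phi|$, $\rho^{AC}=\mathrm{tr}_B|\Phi\rangle\langle\Phi|$. Then $E_2(|\Phi\rangle^{A|BC})=E_2(\rho^{AB})=1-a_0^2$, while $E_2(\rho^{AC})>0$ (indeed $\rho^{AC}$ has a non-positive partial transpose).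
   Context: For a bipartite pure state $|\psi\rangle\in\mathcal H^{X}\otimes\mathcal H^{Y}$ with Schmidt decomposition $|\psi\rangle=\sum_{j=1}^r\lambda_j|e_j\rangle|f_j\rangle$, $\lambda_1\ge\lambda_2\ge\dots\ge\lambda_r>0$, the partial-norm of entanglement is $E_2(|\psi\rangle)=\sum_{i\ge2}\lambda_i^2=1-\lambda_1^2=1-\|\rho^X\|$, where $\rho^X=\mathrm{tr}_Y|\psi\rangle\langle\psi|$ and $\|\cdot\|$ is the operator norm. For a mixed bipartite state $\rho$, $E_2(\rho)=\min\sum_j p_jE_2(|\psi_j\rangle)$, the minimum over all pure-state decompositions $\rho=\sum_jp_j|\psi_j\rangle\langle\psi_j|$ (convex-roof extension). For a tripartite state, $E(A|BC)$ denotes the measure of the state with respect to the bipartition $A$ versus $BC$, and $E(AB)$, $E(AC)$ denote the measure of the reduced states $\rho^{AB}=\mathrm{tr}_C\rho^{ABC}$, $\rho^{AC}=\mathrm{tr}_B\rho^{ABC}$. A bipartite entanglement measure $E$ is called monogamous if for every tripartite state $\rho^{ABC}$ satisfying the disentangling condition $E(A|BC)=E(AB)$ one has $E(AC)=0$. *)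

theory Defs
  imports Complex_Main
begin

text \<open>A vector of C^d is a function nat => complex, only the entries with
index < d matter.
A bipartite pure state on C^m (x) C^n is a coefficient function psi :: nat => nat => complex,
psi i j being the coefficient of |i>|j>, i < m, j < n.
A bipartite operator on C^m (x) C^n is a function (nat*nat) => (nat*nat) => complex,
rho (i,j) (i',j') = <i j| rho |i' j'>.\<close>

definition vnorm2 :: "nat \<Rightarrow> (nat \<Rightarrow> complex) \<Rightarrow> real" where
  "vnorm2 d x = (\<Sum>i<d. (cmod (x i))\<^sup>2)"

definition mat_vec :: "nat \<Rightarrow> (nat \<Rightarrow> nat \<Rightarrow> complex) \<Rightarrow> (nat \<Rightarrow> complex) \<Rightarrow> (nat \<Rightarrow> complex)" where
  "mat_vec d M x = (\<lambda>i. \<Sum>k<d. M i k * x k)"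

definition op_norm :: "nat \<Rightarrow> (nat \<Rightarrow> nat \<Rightarrow> complex) \<Rightarrow> real" where
  "op_norm d M = Sup {sqrt (vnorm2 d (mat_vec d M x)) | x. vnorm2 d x = 1}"

definition reduced_X :: "nat \<Rightarrow> (nat \<Rightarrow> nat \<Rightarrow> complex) \<Rightarrow> (nat \<Rightarrow> nat \<Rightarrow> complex)" where
  "reduced_X n psi = (\<lambda>i i'. \<Sum>j<n. psi i j * cnj (psi i' j))"

definition unit_state :: "nat \<Rightarrow> nat \<Rightarrow> (nat \<Rightarrow> nat \<Rightarrow> complex) \<Rightarrow> bool" where
  "unit_state m n psi \<longleftrightarrow> (\<Sum>i<m. \<Sum>j<n. (cmod (psi i j))\<^sup>2) = 1"

definition E2_pure :: "nat \<Rightarrow> nat \<Rightarrow> (nat \<Rightarrow> nat \<Rightarrow> complex) \<Rightarrow> real" where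
  "E2_pure m n psi = 1 - op_norm m (reduced_X n psi)"

definition is_decomp :: "nat \<Rightarrow> nat \<Rightarrow> (nat \<times> nat \<Rightarrow> nat \<times> nat \<Rightarrow> complex)
     \<Rightarrow> nat \<Rightarrow> (nat \<Rightarrow> real) \<Rightarrow> (nat \<Rightarrow> nat \<Rightarrow> nat \<Rightarrow> complex) \<Rightarrow> bool" where
  "is_decomp m n rho k p psis \<longleftrightarrow>
     (\<forall>l<k. p l \<ge> 0 \<and> unit_state m n (psis l)) \<and> (\<Sum>l<k. p l) = 1 \<and>
     (\<forall>i<m. \<forall>j<n. \<forall>i'<m. \<forall>j'<n.
        rho (i,j) (i',j') = (\<Sum>l<k. complex_of_real (p l) * psis l i j * cnj (psis l i' j')))"

definition E2_mixed :: "nat \<Rightarrow> nat \<Rightarrow> (nat \<times> nat \<Rightarrow> nat \<times> nat \<Rightarrow> complex) \<Rightarrow> real" where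
  "E2_mixed m n rho = Inf {(\<Sum>l<k. p l * E2_pure m n (psis l)) | k p psis. is_decomp m n rho k p psis}"

text \<open>Tripartite pure state Phi a b c on C^dA (x) C^dB (x) C^dC.
Bipartition A|BC: the BC index is encoded as b * dC + c.\<close>
definition A_BC :: "nat \<Rightarrow> (nat \<Rightarrow> nat \<Rightarrow> nat \<Rightarrow> complex) \<Rightarrow> (nat \<Rightarrow> nat \<Rightarrow> complex)" where
  "A_BC dC Phi = (\<lambda>a j. Phi a (j div dC) (j mod dC))"

definition rho_AB :: "nat \<Rightarrow> (nat \<Rightarrow> nat \<Rightarrow> nat \<Rightarrow> complex) \<Rightarrow> (nat \<times> nat \<Rightarrow> nat \<times> nat \<Rightarrow> complex)" where
  "rho_AB dC Phi = (\<lambda>(a,b) (a',b'). \<Sum>c<dC. Phi a b c * cnj (Phi a' b' c))"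

definition rho_AC :: "nat \<Rightarrow> (nat \<Rightarrow> nat \<Rightarrow> nat \<Rightarrow> complex) \<Rightarrow> (nat \<times> nat \<Rightarrow> nat \<times> nat \<Rightarrow> complex)" where
  "rho_AC dB Phi = (\<lambda>(a,c) (a',c'). \<Sum>b<dB. Phi a b c * cnj (Phi a' b c'))"

definition partial_transpose :: "(nat \<times> nat \<Rightarrow> nat \<times> nat \<Rightarrow> complex) \<Rightarrow> (nat \<times> nat \<Rightarrow> nat \<times> nat \<Rightarrow> complex)" where
  "partial_transpose rho = (\<lambda>(i,j) (i',j'). rho (i,j') (i',j))"

definition psd_bip :: "nat \<Rightarrow> nat \<Rightarrow> (nat \<times> nat \<Rightarrow> nat \<times> nat \<Rightarrow> complex) \<Rightarrow> bool" where
  "psd_bip m n M \<longleftrightarrow> (\<forall>x :: nat \<times> nat \<Rightarrow> complex.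
     (let q = (\<Sum>u\<in>{..<m}\<times>{..<n}. \<Sum>v\<in>{..<m}\<times>{..<n}. cnj (x u) * M u v * x v)
      in q \<in> \<real> \<and> Re q \<ge> 0))"

definition psi0 :: "real \<Rightarrow> real \<Rightarrow> real \<Rightarrow> nat \<Rightarrow> nat \<Rightarrow> complex" where
  "psi0 a0 a1 a2 = (\<lambda>i j. if i = 0 \<and> j = 0 then complex_of_real a0
      else if i = 1 \<and> j = 1 then complex_of_real a1
      else if i = 2 \<and> j = 2 then complex_of_real a2 else 0)"

definition psi1 :: "real \<Rightarrow> real \<Rightarrow> real \<Rightarrow> nat \<Rightarrow> nat \<Rightarrow> complex" where
  "psi1 b0 b1 b2 = (\<lambda>i j. if i = 0 \<and> j = 3 then complex_of_real b0
      else if i = 1 \<and> j = 2 then complex_of_real b1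
      else if i = 2 \<and> j = 1 then complex_of_real b2 else 0)"

definition Phi_ex :: "real \<Rightarrow> real \<Rightarrow> real \<Rightarrow> real \<Rightarrow> real \<Rightarrow> real \<Rightarrow> nat \<Rightarrow> nat \<Rightarrow> nat \<Rightarrow> complex" where
  "Phi_ex a0 a1 a2 b0 b1 b2 = (\<lambda>a b c. complex_of_real (1 / sqrt 2) *
      (if c = 0 then psi0 a0 a1 a2 a b else if c = 1 then psi1 b0 b1 b2 a b else 0))"

end

theory Submission
  imports Defs "HOL-Analysis.Convex"
begin


lemma cs_complex:
  fixes x w :: "'a \<Rightarrow> complex"
  shows "(cmod (\<Sum>i\<in>I. cnj (x i) * w i))\<^sup>2 \<le> (\<Sum>i\<in>I. (cmod (x i))\<^sup>2) * (\<Sum>i\<in>I. (cmod (w i))\<^sup>2)"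
proof -
  have "cmod (\<Sum>i\<in>I. cnj (x i) * w i) \<le> (\<Sum>i\<in>I. cmod (x i) * cmod (w i))"
    by (rule order_trans[OF norm_sum]) (simp add: norm_mult)
  hence "(cmod (\<Sum>i\<in>I. cnj (x i) * w i))\<^sup>2 \<le> (\<Sum>i\<in>I. cmod (x i) * cmod (w i))\<^sup>2"
    by (simp add: power_mono)
  also have "\<dots> \<le> (\<Sum>i\<in>I. (cmod (x i))\<^sup>2) * (\<Sum>i\<in>I. (cmod (w i))\<^sup>2)"
    by (rule Cauchy_Schwarz_ineq_sum)
  finally show ?thesis .
qed

lemma vnorm2_nonneg: "vnorm2 d x \<ge> 0"
  unfolding vnorm2_def by (simp add: sum_nonneg)

lemma cmod_sq_complex: "complex_of_real ((cmod z)\<^sup>2) = z * cnj z"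
  by (metis complex_norm_square of_real_power)

lemma vnorm2_complex: "complex_of_real (vnorm2 d x) = (\<Sum>i<d. cnj (x i) * x i)"
  unfolding vnorm2_def of_real_sum by (rule sum.cong) (simp, metis complex_norm_square mult.commute)

definition adj_vec :: "nat \<Rightarrow> (nat \<Rightarrow> nat \<Rightarrow> complex) \<Rightarrow> (nat \<Rightarrow> complex) \<Rightarrow> (nat \<Rightarrow> complex)" where
  "adj_vec m M x = (\<lambda>j. \<Sum>i<m. cnj (M i j) * x i)"

lemma red_factor: "mat_vec m (reduced_X n M) x = mat_vec n M (adj_vec m M x)"
  unfolding mat_vec_def reduced_X_def adj_vec_def
  by (rule ext) (simp add: sum_distrib_left sum_distrib_right mult.assoc sum.swap[of _ "{..<m}"])

lemma adj_inner: "complex_of_real (vnorm2 n (adj_vec m M x)) = (\<Sum>i<m. cnj (x i) * mat_vec n M (adj_vec m M x) i)"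
proof -
  let ?y = "adj_vec m M x"
  have "complex_of_real (vnorm2 n ?y) = (\<Sum>j<n. cnj (?y j) * ?y j)" by (rule vnorm2_complex)
  also have "\<dots> = (\<Sum>j<n. \<Sum>i<m. M i j * cnj (x i) * ?y j)"
    unfolding adj_vec_def by (simp add: sum_distrib_right cnj_sum)
  also have "\<dots> = (\<Sum>i<m. \<Sum>j<n. M i j * cnj (x i) * ?y j)" by (rule sum.swap)
  also have "\<dots> = (\<Sum>i<m. cnj (x i) * mat_vec n M ?y i)"
    unfolding mat_vec_def[of n] by (simp add: sum_distrib_left mult_ac)
  finally show ?thesis .
qed

lemma G_bound:
  assumes c: "c \<ge> 0" and hyp: "\<And>y. vnorm2 m (mat_vec n M y) \<le> c * vnorm2 n y"
  shows "vnorm2 m (mat_vec m (reduced_X n M) x) \<le> c\<^sup>2 * vnorm2 m x"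
proof -
  define y where "y = adj_vec m M x"
  define w where "w = mat_vec n M y"
  define X where "X = vnorm2 m x"
  define Y where "Y = vnorm2 n y"
  define W where "W = vnorm2 m w"
  have X0: "X \<ge> 0" "Y \<ge> 0" "W \<ge> 0" unfolding X_def Y_def W_def by (simp_all add: vnorm2_nonneg)
  have W: "W \<le> c * Y" unfolding W_def Y_def w_def by (rule hyp)
  have "complex_of_real Y = (\<Sum>i<m. cnj (x i) * w i)" unfolding Y_def w_def y_def by (rule adj_inner)
  hence "Y\<^sup>2 = (cmod (\<Sum>i<m. cnj (x i) * w i))\<^sup>2"
    by (metis X0(2) abs_of_nonneg norm_of_real)
  also have "\<dots> \<le> X * W" unfolding X_def W_def vnorm2_def by (rule cs_complex)
  also have "\<dots> \<le> X * (c * Y)" using W X0 by (simp add: mult_left_mono)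
  finally have YY: "Y\<^sup>2 \<le> X * c * Y" by simp
  have Yb: "Y \<le> c * X"
  proof (cases "Y = 0")
    case True thus ?thesis using c X0 by simp
  next
    case False
    hence "Y > 0" using X0 by simp
    with YY show ?thesis by (simp add: power2_eq_square mult_ac)
  qed
  have "W \<le> c * (c * X)" using W Yb c by (meson mult_left_mono order_trans)
  thus ?thesis unfolding W_def w_def y_def X_def by (simp add: red_factor power2_eq_square mult_ac)
qed

lemma op_norm_le:
  assumes m: "m > 0" and s: "s \<ge> 0"
    and hyp: "\<And>x. vnorm2 m x = 1 \<Longrightarrow> vnorm2 m (mat_vec m M x) \<le> s\<^sup>2"
  shows "op_norm m M \<le> s"
  unfolding op_norm_def
proof (rule cSup_least)
  let ?e = "\<lambda>i. if i = 0 then (1::complex) else 0"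
  have "vnorm2 m ?e = 1" unfolding vnorm2_def using m
    by (simp add: if_distrib[of "\<lambda>z. (cmod z)\<^sup>2"] sum.If_cases lessThan_def)
  thus "{sqrt (vnorm2 m (mat_vec m M x)) |x. vnorm2 m x = 1} \<noteq> {}" by blast
next
  fix r assume "r \<in> {sqrt (vnorm2 m (mat_vec m M x)) |x. vnorm2 m x = 1}"
  then obtain x where "vnorm2 m x = 1" "r = sqrt (vnorm2 m (mat_vec m M x))" by blast
  with hyp[of x] s show "r \<le> s" by (metis real_sqrt_abs real_sqrt_le_mono abs_of_nonneg)
qed



lemma op_norm_diag:
  assumes m: "m > 0" and M: "\<And>i k. i < m \<Longrightarrow> k < m \<Longrightarrow> M i k = (if i = k then complex_of_real (t i) else 0)"
    and t0: "t 0 = s" and tb: "\<And>i. i < m \<Longrightarrow> 0 \<le> t i \<and> t i \<le> s"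
  shows "op_norm m M = s"
proof -
  have s0: "s \<ge> 0" using tb[of 0] m t0 by simp
  have mv: "\<And>x i. i < m \<Longrightarrow> mat_vec m M x i = complex_of_real (t i) * x i"
  proof -
    fix x i assume i: "i < m"
    have "mat_vec m M x i = (\<Sum>k<m. (if k = i then complex_of_real (t i) * x k else 0))"
      unfolding mat_vec_def using M i by (intro sum.cong) auto
    also have "\<dots> = complex_of_real (t i) * x i" using i by (simp add: sum.delta)
    finally show "mat_vec m M x i = complex_of_real (t i) * x i" .
  qed
  have bnd: "\<And>x. vnorm2 m (mat_vec m M x) \<le> s\<^sup>2 * vnorm2 m x"
  proof -
    fix x
    have "vnorm2 m (mat_vec m M x) = (\<Sum>i<m. (t i)\<^sup>2 * (cmod (x i))\<^sup>2)"
      unfolding vnorm2_def using mv tb by (intro sum.cong) (auto simp: norm_mult power_mult_distrib)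
    also have "\<dots> \<le> (\<Sum>i<m. s\<^sup>2 * (cmod (x i))\<^sup>2)"
      using tb by (intro sum_mono mult_right_mono power_mono) auto
    finally show "vnorm2 m (mat_vec m M x) \<le> s\<^sup>2 * vnorm2 m x" unfolding vnorm2_def by (simp add: sum_distrib_left)
  qed
  have le: "op_norm m M \<le> s" using m s0 by (rule op_norm_le) (metis bnd mult.right_neutral)
  let ?e = "\<lambda>i. if i = 0 then (1::complex) else 0"
  have e1: "vnorm2 m ?e = 1" unfolding vnorm2_def using m
    by (simp add: if_distrib[of "\<lambda>z. (cmod z)\<^sup>2"] sum.If_cases lessThan_def)
  have "vnorm2 m (mat_vec m M ?e) = (\<Sum>i<m. if i = 0 then s\<^sup>2 else 0)"
    unfolding vnorm2_def using mv t0 by (intro sum.cong) auto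
  also have "\<dots> = s\<^sup>2" using m by (simp add: sum.delta)
  finally have ee: "sqrt (vnorm2 m (mat_vec m M ?e)) = s" using s0 by simp
  have "s \<le> op_norm m M" unfolding op_norm_def
  proof (rule cSup_upper)
    show "s \<in> {sqrt (vnorm2 m (mat_vec m M x)) |x. vnorm2 m x = 1}" using ee e1 by force
    show "bdd_above {sqrt (vnorm2 m (mat_vec m M x)) |x. vnorm2 m x = 1}"
    proof (rule bdd_aboveI)
      fix r assume "r \<in> {sqrt (vnorm2 m (mat_vec m M x)) |x. vnorm2 m x = 1}"
      then obtain x where "vnorm2 m x = 1" "r = sqrt (vnorm2 m (mat_vec m M x))" by blast
      with bnd[of x] s0 show "r \<le> s" by (metis mult.right_neutral real_sqrt_abs real_sqrt_le_mono abs_of_nonneg)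
    qed
  qed
  with le show ?thesis by simp
qed



lemma cnorm_sq: "complex_of_real ((cmod z)\<^sup>2) = z * cnj z"
  by (metis complex_norm_square of_real_power)

lemma lagrange3:
  fixes u0 u1 u2 v0 v1 v2 :: complex
  shows "((cmod u0)\<^sup>2 + (cmod u1)\<^sup>2 + (cmod u2)\<^sup>2) * ((cmod v0)\<^sup>2 + (cmod v1)\<^sup>2 + (cmod v2)\<^sup>2)
     - (cmod (cnj u0 * v0 + cnj u1 * v1 + cnj u2 * v2))\<^sup>2
   = (cmod (u0*v1 - u1*v0))\<^sup>2 + (cmod (u0*v2 - u2*v0))\<^sup>2 + (cmod (u1*v2 - u2*v1))\<^sup>2"
proof -
  have "complex_of_real (((cmod u0)\<^sup>2 + (cmod u1)\<^sup>2 + (cmod u2)\<^sup>2) * ((cmod v0)\<^sup>2 + (cmod v1)\<^sup>2 + (cmod v2)\<^sup>2)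
     - (cmod (cnj u0 * v0 + cnj u1 * v1 + cnj u2 * v2))\<^sup>2)
    = complex_of_real ((cmod (u0*v1 - u1*v0))\<^sup>2 + (cmod (u0*v2 - u2*v0))\<^sup>2 + (cmod (u1*v2 - u2*v1))\<^sup>2)"
    unfolding of_real_add of_real_mult of_real_diff cnorm_sq complex_cnj_add complex_cnj_mult complex_cnj_diff complex_cnj_cnj
    by algebra
  thus ?thesis using of_real_eq_iff by blast
qed

lemma quad_real:
  fixes A C s p q :: real
  assumes "A \<ge> 0" "C \<ge> 0" "s \<ge> 0" "A * C \<ge> s\<^sup>2" "p \<ge> 0" "q \<ge> 0"
  shows "2 * s * p * q \<le> A * p\<^sup>2 + C * q\<^sup>2"
proof -
  have "2 * s * p * q \<le> 2 * sqrt (A*C) * p * q"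
    using assms by (intro mult_right_mono) (auto intro: real_le_rsqrt)
  also have "\<dots> = 2 * (sqrt A * p) * (sqrt C * q)" by (simp add: real_sqrt_mult)
  also have "\<dots> \<le> (sqrt A * p)\<^sup>2 + (sqrt C * q)\<^sup>2" by (rule sum_squares_bound)
  also have "\<dots> = A * p\<^sup>2 + C * q\<^sup>2" using assms by (simp add: power_mult_distrib)
  finally show ?thesis .
qed

lemma core32:
  fixes u0 u1 u2 v0 v1 v2 y0 y1 :: complex
  defines "N0 \<equiv> (cmod u0)\<^sup>2 + (cmod u1)\<^sup>2 + (cmod u2)\<^sup>2"
    and "N1 \<equiv> (cmod v0)\<^sup>2 + (cmod v1)\<^sup>2 + (cmod v2)\<^sup>2"
    and "n \<equiv> cnj u0 * v0 + cnj u1 * v1 + cnj u2 * v2"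
  assumes tr: "N0 + N1 = 1"
  shows "(cmod (u0*y0 + v0*y1))\<^sup>2 + (cmod (u1*y0 + v1*y1))\<^sup>2 + (cmod (u2*y0 + v2*y1))\<^sup>2
     \<le> (1 - (N0 * N1 - (cmod n)\<^sup>2)) * ((cmod y0)\<^sup>2 + (cmod y1)\<^sup>2)"
proof -
  define z where "z = cnj y0 * y1 * n"
  define d where "d = N0 * N1 - (cmod n)\<^sup>2"
  have eq: "complex_of_real ((cmod (u0*y0 + v0*y1))\<^sup>2 + (cmod (u1*y0 + v1*y1))\<^sup>2 + (cmod (u2*y0 + v2*y1))\<^sup>2)
      = complex_of_real (N0 * (cmod y0)\<^sup>2 + N1 * (cmod y1)\<^sup>2) + (z + cnj z)"
    unfolding of_real_add of_real_mult cnorm_sq N0_def N1_def z_def n_def complex_cnj_add complex_cnj_mult complex_cnj_cnj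
    by algebra
  have "Re (z + cnj z) = 2 * Re z" by simp
  also have "\<dots> \<le> 2 * cmod z" using complex_Re_le_cmod by simp
  also have "cmod z = cmod n * cmod y0 * cmod y1" unfolding z_def by (simp add: norm_mult)
  finally have zb: "Re (z + cnj z) \<le> 2 * cmod n * cmod y0 * cmod y1" by simp
  have lhs: "(cmod (u0*y0 + v0*y1))\<^sup>2 + (cmod (u1*y0 + v1*y1))\<^sup>2 + (cmod (u2*y0 + v2*y1))\<^sup>2
      = N0 * (cmod y0)\<^sup>2 + N1 * (cmod y1)\<^sup>2 + Re (z + cnj z)"
    using arg_cong[OF eq, of Re] by (simp only: Re_complex_of_real plus_complex.sel)
  have N0: "N0 \<ge> 0" "N1 \<ge> 0" unfolding N0_def N1_def by simp_all
  have N0e: "N0 = 1 - N1" using tr by simp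
  have A: "N1 - d = N1\<^sup>2 + (cmod n)\<^sup>2" unfolding d_def N0e by (simp add: algebra_simps power2_eq_square)
  have C: "N0 - d = N0\<^sup>2 + (cmod n)\<^sup>2" unfolding d_def N0e by (simp add: algebra_simps power2_eq_square)
  have AC: "(N1 - d) * (N0 - d) \<ge> (cmod n)\<^sup>2"
  proof -
    have "(N1 - d) * (N0 - d) = (cmod n)\<^sup>2 + d\<^sup>2"
      unfolding d_def N0e by (simp add: algebra_simps power2_eq_square)
    thus ?thesis by simp
  qed
  have H: "2 * cmod n * cmod y0 * cmod y1 \<le> (N1 - d) * (cmod y0)\<^sup>2 + (N0 - d) * (cmod y1)\<^sup>2"
    by (rule quad_real) (use A C AC in auto)
  have "N0 * (cmod y0)\<^sup>2 + N1 * (cmod y1)\<^sup>2 + Re (z + cnj z) \<le> N0 * (cmod y0)\<^sup>2 + N1 * (cmod y1)\<^sup>2 + ((N1 - d) * (cmod y0)\<^sup>2 + (N0 - d) * (cmod y1)\<^sup>2)"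
    using zb H by linarith
  also have "\<dots> = (N0 + N1 - d) * ((cmod y0)\<^sup>2 + (cmod y1)\<^sup>2)" by (simp add: algebra_simps)
  finally have "N0 * (cmod y0)\<^sup>2 + N1 * (cmod y1)\<^sup>2 + Re (z + cnj z) \<le> (1 - d) * ((cmod y0)\<^sup>2 + (cmod y1)\<^sup>2)"
    using tr by simp
  thus ?thesis using lhs d_def by simp
qed



lemma sum2: "(\<Sum>i::nat<2. f i) = f 0 + f 1" by (simp add: eval_nat_numeral)
lemma sum3: "(\<Sum>i::nat<3. f i) = f 0 + f 1 + f 2" by (simp add: eval_nat_numeral)
lemma sum4: "(\<Sum>i::nat<4. f i) = f 0 + f 1 + f 2 + f 3" by (simp add: eval_nat_numeral)
lemma sum8: "(\<Sum>i::nat<8. f i) = f 0 + f 1 + f 2 + f 3 + f 4 + f 5 + f 6 + f 7" by (simp add: eval_nat_numeral)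

lemma L32:
  assumes u: "unit_state 3 2 \<psi>"
  shows "(cmod (\<psi> 1 0 * \<psi> 2 1 - \<psi> 1 1 * \<psi> 2 0))\<^sup>2 \<le> E2_pure 3 2 \<psi>"
proof -
  define N0 where "N0 = (cmod (\<psi> 0 0))\<^sup>2 + (cmod (\<psi> 1 0))\<^sup>2 + (cmod (\<psi> 2 0))\<^sup>2"
  define N1 where "N1 = (cmod (\<psi> 0 1))\<^sup>2 + (cmod (\<psi> 1 1))\<^sup>2 + (cmod (\<psi> 2 1))\<^sup>2"
  define n where "n = cnj (\<psi> 0 0) * \<psi> 0 1 + cnj (\<psi> 1 0) * \<psi> 1 1 + cnj (\<psi> 2 0) * \<psi> 2 1"
  define d where "d = N0 * N1 - (cmod n)\<^sup>2"
  have tr: "N0 + N1 = 1" using u unfolding unit_state_def N0_def N1_def by (simp add: sum2 sum3)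
  have dl: "d = (cmod (\<psi> 0 0*\<psi> 1 1 - \<psi> 1 0*\<psi> 0 1))\<^sup>2 + (cmod (\<psi> 0 0*\<psi> 2 1 - \<psi> 2 0*\<psi> 0 1))\<^sup>2 + (cmod (\<psi> 1 0*\<psi> 2 1 - \<psi> 2 0*\<psi> 1 1))\<^sup>2"
    unfolding d_def N0_def N1_def n_def by (rule lagrange3)
  have dm: "(cmod (\<psi> 1 0 * \<psi> 2 1 - \<psi> 1 1 * \<psi> 2 0))\<^sup>2 \<le> d"
    unfolding dl by (simp add: mult.commute)
  have N0: "N0 \<ge> 0" "N1 \<ge> 0" unfolding N0_def N1_def by simp_all
  have "d \<le> N0 * N1" unfolding d_def by simp
  also have "\<dots> \<le> 1" using N0 tr by (smt (verit) mult_left_le_one_le)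
  finally have c0: "1 - d \<ge> 0" by simp
  have hyp: "\<And>y. vnorm2 3 (mat_vec 2 \<psi> y) \<le> (1 - d) * vnorm2 2 y"
  proof -
    fix y
    show "vnorm2 3 (mat_vec 2 \<psi> y) \<le> (1 - d) * vnorm2 2 y"
      using core32[of "\<psi> 0 0" "\<psi> 1 0" "\<psi> 2 0" "\<psi> 0 1" "\<psi> 1 1" "\<psi> 2 1" "y 0" "y 1"] tr
      unfolding vnorm2_def mat_vec_def sum2 sum3 d_def N0_def N1_def n_def by simp
  qed
  have "op_norm 3 (reduced_X 2 \<psi>) \<le> 1 - d"
  proof (rule op_norm_le)
    fix x :: "nat \<Rightarrow> complex" assume "vnorm2 3 x = 1"
    thus "vnorm2 3 (mat_vec 3 (reduced_X 2 \<psi>) x) \<le> (1 - d)\<^sup>2"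
      using G_bound[OF c0 hyp, of x] by simp
  qed (use c0 in auto)
  thus ?thesis unfolding E2_pure_def using dm by simp
qed



lemma quad_expand:
  fixes f :: "nat \<Rightarrow> 'u \<Rightarrow> complex" and w :: "'u \<Rightarrow> complex"
  shows "(\<Sum>u\<in>S. \<Sum>v\<in>S. cnj (w u) * (\<Sum>l\<in>L. complex_of_real (p l) * f l u * cnj (f l v)) * w v)
       = (\<Sum>l\<in>L. complex_of_real (p l * (cmod (\<Sum>u\<in>S. cnj (w u) * f l u))\<^sup>2))"
proof -
  have "(\<Sum>u\<in>S. \<Sum>v\<in>S. cnj (w u) * (\<Sum>l\<in>L. complex_of_real (p l) * f l u * cnj (f l v)) * w v)
      = (\<Sum>u\<in>S. \<Sum>v\<in>S. \<Sum>l\<in>L. complex_of_real (p l) * (cnj (w u) * f l u) * (w v * cnj (f l v)))"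
  proof (intro sum.cong refl)
    fix u v
    have "cnj (w u) * (\<Sum>l\<in>L. complex_of_real (p l) * f l u * cnj (f l v)) * w v
       = (\<Sum>l\<in>L. cnj (w u) * (complex_of_real (p l) * f l u * cnj (f l v)) * w v)"
      by (simp only: sum_distrib_left sum_distrib_right)
    also have "\<dots> = (\<Sum>l\<in>L. complex_of_real (p l) * (cnj (w u) * f l u) * (w v * cnj (f l v)))"
      by (intro sum.cong refl) (simp only: mult_ac)
    finally show "cnj (w u) * (\<Sum>l\<in>L. complex_of_real (p l) * f l u * cnj (f l v)) * w v
       = (\<Sum>l\<in>L. complex_of_real (p l) * (cnj (w u) * f l u) * (w v * cnj (f l v)))" .
  qed
  also have "\<dots> = (\<Sum>u\<in>S. \<Sum>l\<in>L. \<Sum>v\<in>S. complex_of_real (p l) * (cnj (w u) * f l u) * (w v * cnj (f l v)))"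
    by (rule sum.cong[OF refl], rule sum.swap)
  also have "\<dots> = (\<Sum>l\<in>L. \<Sum>u\<in>S. \<Sum>v\<in>S. complex_of_real (p l) * (cnj (w u) * f l u) * (w v * cnj (f l v)))"
    by (rule sum.swap)
  also have "\<dots> = (\<Sum>l\<in>L. complex_of_real (p l) * (\<Sum>u\<in>S. cnj (w u) * f l u) * cnj (\<Sum>u\<in>S. cnj (w u) * f l u))"
  proof (intro sum.cong refl)
    fix l
    have "complex_of_real (p l) * (\<Sum>u\<in>S. cnj (w u) * f l u) * cnj (\<Sum>u\<in>S. cnj (w u) * f l u)
       = complex_of_real (p l) * (\<Sum>u\<in>S. cnj (w u) * f l u) * (\<Sum>v\<in>S. w v * cnj (f l v))"
      by (simp add: cnj_sum)
    also have "\<dots> = (\<Sum>u\<in>S. \<Sum>v\<in>S. complex_of_real (p l) * (cnj (w u) * f l u) * (w v * cnj (f l v)))"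
      by (simp only: sum_distrib_left sum_distrib_right mult.assoc) (rule sum.swap)
    finally show "(\<Sum>u\<in>S. \<Sum>v\<in>S. complex_of_real (p l) * (cnj (w u) * f l u) * (w v * cnj (f l v)))
      = complex_of_real (p l) * (\<Sum>u\<in>S. cnj (w u) * f l u) * cnj (\<Sum>u\<in>S. cnj (w u) * f l u)" by (rule sym)
  qed
  also have "\<dots> = (\<Sum>l\<in>L. complex_of_real (p l * (cmod (\<Sum>u\<in>S. cnj (w u) * f l u))\<^sup>2))"
    by (simp only: of_real_mult cnorm_sq mult.assoc)
  finally show ?thesis .
qed

lemma span_zero:
  fixes f g :: "nat \<Rightarrow> 'u \<Rightarrow> complex" and w :: "'u \<Rightarrow> complex"
  assumes eq: "\<And>u v. u\<in>S \<Longrightarrow> v\<in>S \<Longrightarrow> (\<Sum>l<k. complex_of_real (p l) * f l u * cnj (f l v)) = (\<Sum>c<r. g c u * cnj (g c v))"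
    and pnn: "\<And>l. l<k \<Longrightarrow> p l \<ge> 0"
    and orth: "\<And>c. c<r \<Longrightarrow> (\<Sum>u\<in>S. cnj (w u) * g c u) = 0"
    and l: "l < k" "p l > 0"
  shows "(\<Sum>u\<in>S. cnj (w u) * f l u) = 0"
proof -
  have "(\<Sum>l<k. complex_of_real (p l * (cmod (\<Sum>u\<in>S. cnj (w u) * f l u))\<^sup>2))
     = (\<Sum>u\<in>S. \<Sum>v\<in>S. cnj (w u) * (\<Sum>l<k. complex_of_real (p l) * f l u * cnj (f l v)) * w v)"
    by (rule quad_expand[symmetric])
  also have "\<dots> = (\<Sum>u\<in>S. \<Sum>v\<in>S. cnj (w u) * (\<Sum>c<r. complex_of_real ((\<lambda>_. 1) c) * g c u * cnj (g c v)) * w v)"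
  proof (rule sum.cong[OF refl], rule sum.cong[OF refl])
    fix u v assume uv: "u\<in>S" "v\<in>S"
    show "cnj (w u) * (\<Sum>l<k. complex_of_real (p l) * f l u * cnj (f l v)) * w v =
         cnj (w u) * (\<Sum>c<r. complex_of_real ((\<lambda>_. 1) c) * g c u * cnj (g c v)) * w v"
      using eq[OF uv] by simp
  qed
  also have "\<dots> = (\<Sum>c<r. complex_of_real (1 * (cmod (\<Sum>u\<in>S. cnj (w u) * g c u))\<^sup>2))"
    by (rule quad_expand)
  also have "\<dots> = 0" using orth by simp
  finally have "complex_of_real (\<Sum>l<k. p l * (cmod (\<Sum>u\<in>S. cnj (w u) * f l u))\<^sup>2) = 0"
    unfolding of_real_sum .
  hence "(\<Sum>l<k. p l * (cmod (\<Sum>u\<in>S. cnj (w u) * f l u))\<^sup>2) = 0"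
    by (simp only: of_real_eq_0_iff)
  hence "\<forall>l\<in>{..<k}. p l * (cmod (\<Sum>u\<in>S. cnj (w u) * f l u))\<^sup>2 = 0"
    by (subst sum_nonneg_eq_0_iff[symmetric]) (auto simp: pnn)
  with l show ?thesis by force
qed



lemma sqrt2c: "complex_of_real (sqrt 2) * complex_of_real (sqrt 2) = 2"
  by (metis of_real_mult of_real_numeral real_sqrt_mult_self abs_numeral)

lemma lt3: "(i::nat) < 3 \<Longrightarrow> i = 0 \<or> i = 1 \<or> i = 2" by auto

lemma part1:
  assumes "a0\<^sup>2 = b0\<^sup>2" "a0\<^sup>2 \<ge> 1/2" "a0\<^sup>2 + a1\<^sup>2 + a2\<^sup>2 = 1" "b0\<^sup>2 + b1\<^sup>2 + b2\<^sup>2 = 1"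
  shows "E2_pure 3 8 (A_BC 2 (Phi_ex a0 a1 a2 b0 b1 b2)) = 1 - a0\<^sup>2"
proof -
  define t where "t i = (if i = 0 then a0\<^sup>2 else if i = 1 then (a1\<^sup>2 + b1\<^sup>2)/2 else (a2\<^sup>2 + b2\<^sup>2)/2)" for i :: nat
  have ent: "reduced_X 8 (A_BC 2 (Phi_ex a0 a1 a2 b0 b1 b2)) i k = (if i = k then complex_of_real (t i) else 0)"
    if "i < 3" "k < 3" for i k
  proof -
    have e: "complex_of_real a0 * complex_of_real a0 = complex_of_real b0 * complex_of_real b0"
      using assms(1) by (metis of_real_mult power2_eq_square)
    show ?thesis
      using lt3[OF that(1)] lt3[OF that(2)]
      unfolding reduced_X_def A_BC_def Phi_ex_def psi0_def psi1_def sum8 t_def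
      by (elim disjE; simp add: sqrt2c e power2_eq_square field_simps)
  qed
  have "op_norm 3 (reduced_X 8 (A_BC 2 (Phi_ex a0 a1 a2 b0 b1 b2))) = a0\<^sup>2"
  proof (rule op_norm_diag[where t = t])
    show "\<And>i k. i < 3 \<Longrightarrow> k < 3 \<Longrightarrow> reduced_X 8 (A_BC 2 (Phi_ex a0 a1 a2 b0 b1 b2)) i k = (if i = k then complex_of_real (t i) else 0)"
      by (rule ent)
    show "\<And>i. i < 3 \<Longrightarrow> 0 \<le> t i \<and> t i \<le> a0\<^sup>2"
      unfolding t_def using assms
      by (auto simp: add_nonneg_nonneg) (smt (verit) zero_le_power2)+
  qed (auto simp: t_def)
  thus ?thesis unfolding E2_pure_def by simp
qed



lemma cs2: "(cmod (p*x + q*y))\<^sup>2 \<le> ((cmod p)\<^sup>2 + (cmod q)\<^sup>2) * ((cmod x)\<^sup>2 + (cmod y)\<^sup>2)"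
proof -
  have "cmod (p*x + q*y) \<le> cmod p * cmod x + cmod q * cmod y"
    by (metis norm_mult norm_triangle_ineq)
  hence "(cmod (p*x + q*y))\<^sup>2 \<le> (cmod p * cmod x + cmod q * cmod y)\<^sup>2"
    by (simp add: power_mono)
  also have "\<dots> \<le> ((cmod p)\<^sup>2 + (cmod q)\<^sup>2) * ((cmod x)\<^sup>2 + (cmod y)\<^sup>2)"
  proof -
    have "0 \<le> (cmod p * cmod y - cmod q * cmod x)\<^sup>2" by simp
    thus ?thesis by (simp add: power2_eq_square algebra_simps)
  qed
  finally show ?thesis .
qed

lemma part2_pure:
  fixes \<psi> :: "nat \<Rightarrow> nat \<Rightarrow> complex" and \<alpha> \<beta> :: complex
  assumes span: "\<And>i j. i < 3 \<Longrightarrow> j < 4 \<Longrightarrow> \<psi> i j = \<alpha> * psi0 a0 a1 a2 i j + \<beta> * psi1 b0 b1 b2 i j"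
    and b0eq: "b0 = a0"
    and ab: "(cmod \<alpha>)\<^sup>2 + (cmod \<beta>)\<^sup>2 = 1"
    and h: "a0\<^sup>2 = b0\<^sup>2" "a0\<^sup>2 \<ge> 1/2" "a0\<^sup>2 + a1\<^sup>2 + a2\<^sup>2 = 1" "b0\<^sup>2 + b1\<^sup>2 + b2\<^sup>2 = 1"
  shows "E2_pure 3 4 \<psi> \<ge> 1 - a0\<^sup>2"
proof -
  have c0: "a0\<^sup>2 \<ge> 0" by simp
  have hyp: "vnorm2 3 (mat_vec 4 \<psi> y) \<le> a0\<^sup>2 * vnorm2 4 y" for y
  proof -
    have e: "vnorm2 3 (mat_vec 4 \<psi> y) = (cmod (of_real a0 * (\<alpha> * y 0 + \<beta> * y 3)))\<^sup>2
       + (cmod (\<alpha> * of_real a1 * y 1 + \<beta> * of_real b1 * y 2))\<^sup>2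
       + (cmod (\<beta> * of_real b2 * y 1 + \<alpha> * of_real a2 * y 2))\<^sup>2"
      unfolding vnorm2_def mat_vec_def sum3 sum4
      by (simp add: span psi0_def psi1_def algebra_simps b0eq)
    have r0: "(cmod (of_real a0 * (\<alpha> * y 0 + \<beta> * y 3)))\<^sup>2 \<le> a0\<^sup>2 * ((cmod (y 0))\<^sup>2 + (cmod (y 3))\<^sup>2)"
      using cs2[of \<alpha> "y 0" \<beta> "y 3"] ab by (simp add: norm_mult power_mult_distrib mult_left_mono)
    have r1: "(cmod (\<alpha> * of_real a1 * y 1 + \<beta> * of_real b1 * y 2))\<^sup>2 \<le> ((cmod \<alpha>)\<^sup>2 * a1\<^sup>2 + (cmod \<beta>)\<^sup>2 * b1\<^sup>2) * ((cmod (y 1))\<^sup>2 + (cmod (y 2))\<^sup>2)"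
      using cs2[of "\<alpha> * of_real a1" "y 1" "\<beta> * of_real b1" "y 2"] by (simp add: norm_mult power_mult_distrib)
    have r2: "(cmod (\<beta> * of_real b2 * y 1 + \<alpha> * of_real a2 * y 2))\<^sup>2 \<le> ((cmod \<beta>)\<^sup>2 * b2\<^sup>2 + (cmod \<alpha>)\<^sup>2 * a2\<^sup>2) * ((cmod (y 1))\<^sup>2 + (cmod (y 2))\<^sup>2)"
      using cs2[of "\<beta> * of_real b2" "y 1" "\<alpha> * of_real a2" "y 2"] by (simp add: norm_mult power_mult_distrib)
    have cf: "((cmod \<alpha>)\<^sup>2 * a1\<^sup>2 + (cmod \<beta>)\<^sup>2 * b1\<^sup>2) + ((cmod \<beta>)\<^sup>2 * b2\<^sup>2 + (cmod \<alpha>)\<^sup>2 * a2\<^sup>2) = 1 - a0\<^sup>2"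
    proof -
      have "((cmod \<alpha>)\<^sup>2 * a1\<^sup>2 + (cmod \<beta>)\<^sup>2 * b1\<^sup>2) + ((cmod \<beta>)\<^sup>2 * b2\<^sup>2 + (cmod \<alpha>)\<^sup>2 * a2\<^sup>2)
          = (cmod \<alpha>)\<^sup>2 * (a1\<^sup>2 + a2\<^sup>2) + (cmod \<beta>)\<^sup>2 * (b1\<^sup>2 + b2\<^sup>2)" by (simp add: algebra_simps)
      also have "\<dots> = (cmod \<alpha>)\<^sup>2 * (1 - a0\<^sup>2) + (cmod \<beta>)\<^sup>2 * (1 - a0\<^sup>2)" proof -
        have "a1\<^sup>2 + a2\<^sup>2 = 1 - a0\<^sup>2" "b1\<^sup>2 + b2\<^sup>2 = 1 - a0\<^sup>2" using h by linarith+
        thus ?thesis by simp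
      qed
      also have "\<dots> = 1 - a0\<^sup>2" using ab by (metis distrib_right mult_1)
      finally show ?thesis .
    qed
    have Y: "(cmod (y 1))\<^sup>2 + (cmod (y 2))\<^sup>2 \<ge> 0" by simp
    have "(cmod (\<alpha> * of_real a1 * y 1 + \<beta> * of_real b1 * y 2))\<^sup>2 + (cmod (\<beta> * of_real b2 * y 1 + \<alpha> * of_real a2 * y 2))\<^sup>2
        \<le> (1 - a0\<^sup>2) * ((cmod (y 1))\<^sup>2 + (cmod (y 2))\<^sup>2)"
      using r1 r2 cf by (smt (verit) distrib_right)
    also have "\<dots> \<le> a0\<^sup>2 * ((cmod (y 1))\<^sup>2 + (cmod (y 2))\<^sup>2)" using h Y by (intro mult_right_mono) auto
    finally have "vnorm2 3 (mat_vec 4 \<psi> y) \<le> a0\<^sup>2 * ((cmod (y 0))\<^sup>2 + (cmod (y 3))\<^sup>2) + a0\<^sup>2 * ((cmod (y 1))\<^sup>2 + (cmod (y 2))\<^sup>2)"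
      using e r0 by linarith
    thus ?thesis unfolding vnorm2_def sum4 by (simp add: algebra_simps)
  qed
  have "op_norm 3 (reduced_X 4 \<psi>) \<le> a0\<^sup>2"
  proof (rule op_norm_le)
    fix x :: "nat \<Rightarrow> complex" assume "vnorm2 3 x = 1"
    thus "vnorm2 3 (mat_vec 3 (reduced_X 4 \<psi>) x) \<le> (a0\<^sup>2)\<^sup>2"
      using G_bound[OF c0 hyp, of x] by simp
  qed (use c0 in auto)
  thus ?thesis unfolding E2_pure_def by simp
qed




lemma sumS: "(\<Sum>u\<in>{..<m::nat}\<times>{..<n::nat}. F u) = (\<Sum>i<m. \<Sum>j<n. F (i,j))"
  by (simp add: sum.cartesian_product)

lemma part2_span:
  assumes dec: "is_decomp 3 4 (rho_AB 2 (Phi_ex a0 a1 a2 b0 b1 b2)) k p \<psi>s"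
    and l: "l < k" "p l > 0"
    and b0eq: "b0 = a0"
    and h: "a0\<^sup>2 + a1\<^sup>2 + a2\<^sup>2 = 1" "b0\<^sup>2 + b1\<^sup>2 + b2\<^sup>2 = 1"
  shows "\<exists>\<alpha> \<beta>. (\<forall>i<3. \<forall>j<4. \<psi>s l i j = \<alpha> * psi0 a0 a1 a2 i j + \<beta> * psi1 b0 b1 b2 i j)
            \<and> (cmod \<alpha>)\<^sup>2 + (cmod \<beta>)\<^sup>2 = 1"
proof -
  define S where "S = {..<3::nat} \<times> {..<4::nat}"
  define f where "f l' = (\<lambda>(i,j). \<psi>s l' i j)" for l'
  define g where "g c = (\<lambda>(i,j). Phi_ex a0 a1 a2 b0 b1 b2 i j c)" for c
  define P0 where "P0 = (\<lambda>(i,j). psi0 a0 a1 a2 i j)"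
  define P1 where "P1 = (\<lambda>(i,j). psi1 b0 b1 b2 i j)"
  have pnn: "\<And>l. l < k \<Longrightarrow> p l \<ge> 0" using dec unfolding is_decomp_def by blast
  have eq: "(\<Sum>l<k. complex_of_real (p l) * f l u * cnj (f l v)) = (\<Sum>c<2. g c u * cnj (g c v))"
    if uvS: "u \<in> S" "v \<in> S" for u v
  proof -
    obtain i j i' j' where u: "u = (i,j)" "v = (i',j')" "i < 3" "j < 4" "i' < 3" "j' < 4"
      using uvS unfolding S_def by force
    have "rho_AB 2 (Phi_ex a0 a1 a2 b0 b1 b2) (i,j) (i',j') = (\<Sum>l<k. complex_of_real (p l) * \<psi>s l i j * cnj (\<psi>s l i' j'))"
      using dec u unfolding is_decomp_def by blast
    thus ?thesis unfolding u f_def g_def rho_AB_def by simp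
  qed
  have P0r: "cnj (P0 u) = P0 u" for u unfolding P0_def psi0_def by (auto split: prod.splits)
  have P1r: "cnj (P1 u) = P1 u" for u unfolding P1_def psi1_def by (auto split: prod.splits)
  have P01: "P0 u * P1 u = 0" for u unfolding P0_def P1_def psi0_def psi1_def by (auto split: prod.splits)
  have s00: "(\<Sum>u\<in>S. P0 u * P0 u) = 1"
  proof -
    have "(\<Sum>u\<in>S. P0 u * P0 u) = complex_of_real (a0\<^sup>2 + a1\<^sup>2 + a2\<^sup>2)"
      unfolding S_def sumS sum3 sum4 P0_def psi0_def by (simp add: power2_eq_square)
    thus ?thesis using h by simp
  qed
  have s11: "(\<Sum>u\<in>S. P1 u * P1 u) = 1"
  proof -
    have "(\<Sum>u\<in>S. P1 u * P1 u) = complex_of_real (b0\<^sup>2 + b1\<^sup>2 + b2\<^sup>2)"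
      unfolding S_def sumS sum3 sum4 P1_def psi1_def by (simp add: power2_eq_square)
    thus ?thesis using h by simp
  qed
  have s10: "(\<Sum>u\<in>S. P0 u * P1 u) = 0" by (rule sum.neutral) (use P01 in blast)
  have s01: "(\<Sum>u\<in>S. P1 u * P0 u) = 0" using s10 by (simp add: mult.commute)
  define \<alpha> where "\<alpha> = (\<Sum>u\<in>S. P0 u * f l u)"
  define \<beta> where "\<beta> = (\<Sum>u\<in>S. P1 u * f l u)"
  define w where "w u = f l u - \<alpha> * P0 u - \<beta> * P1 u" for u
  have w0: "(\<Sum>u\<in>S. cnj (w u) * P0 u) = 0"
  proof -
    have "(\<Sum>u\<in>S. cnj (w u) * P0 u) = (\<Sum>u\<in>S. cnj (f l u) * P0 u) - cnj \<alpha> * (\<Sum>u\<in>S. P0 u * P0 u) - cnj \<beta> * (\<Sum>u\<in>S. P1 u * P0 u)"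
      unfolding w_def by (simp add: P0r P1r sum_subtractf sum_distrib_left sum.distrib algebra_simps)
    also have "(\<Sum>u\<in>S. cnj (f l u) * P0 u) = cnj \<alpha>" unfolding \<alpha>_def cnj_sum by (simp add: P0r mult.commute)
    finally show ?thesis using s00 s01 by simp
  qed
  have w1: "(\<Sum>u\<in>S. cnj (w u) * P1 u) = 0"
  proof -
    have "(\<Sum>u\<in>S. cnj (w u) * P1 u) = (\<Sum>u\<in>S. cnj (f l u) * P1 u) - cnj \<alpha> * (\<Sum>u\<in>S. P0 u * P1 u) - cnj \<beta> * (\<Sum>u\<in>S. P1 u * P1 u)"
      unfolding w_def by (simp add: P0r P1r sum_subtractf sum_distrib_left sum.distrib algebra_simps)
    also have "(\<Sum>u\<in>S. cnj (f l u) * P1 u) = cnj \<beta>" unfolding \<beta>_def cnj_sum by (simp add: P1r mult.commute)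
    finally show ?thesis using s11 s10 by simp
  qed
  have orth: "(\<Sum>u\<in>S. cnj (w u) * g c u) = 0" if "c < 2" for c
  proof -
    have "c = 0 \<or> c = 1" using that by auto
    moreover have "g 0 = (\<lambda>u. complex_of_real (1 / sqrt 2) * P0 u)" unfolding g_def P0_def Phi_ex_def by auto
    moreover have "g 1 = (\<lambda>u. complex_of_real (1 / sqrt 2) * P1 u)" unfolding g_def P1_def Phi_ex_def by auto
    ultimately show ?thesis using w0 w1
      by (auto simp: sum_divide_distrib[symmetric])
  qed
  have wf: "(\<Sum>u\<in>S. cnj (w u) * f l u) = 0"
    by (rule span_zero[OF eq pnn orth l]) auto
  have "(\<Sum>u\<in>S. cnj (w u) * w u) = (\<Sum>u\<in>S. cnj (w u) * f l u) - \<alpha> * (\<Sum>u\<in>S. cnj (w u) * P0 u) - \<beta> * (\<Sum>u\<in>S. cnj (w u) * P1 u)"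
    unfolding w_def[of u for u] by (simp add: sum_subtractf sum_distrib_left sum.distrib algebra_simps)
  hence "(\<Sum>u\<in>S. cnj (w u) * w u) = 0" using wf w0 w1 by simp
  moreover have "(\<Sum>u\<in>S. complex_of_real ((cmod (w u))\<^sup>2)) = (\<Sum>u\<in>S. cnj (w u) * w u)"
    by (intro sum.cong refl) (metis cnorm_sq mult.commute)
  ultimately have "complex_of_real (\<Sum>u\<in>S. (cmod (w u))\<^sup>2) = 0"
    unfolding of_real_sum by simp
  hence "(\<Sum>u\<in>S. (cmod (w u))\<^sup>2) = 0" by (simp only: of_real_eq_0_iff)
  hence wz: "\<forall>u\<in>S. w u = 0" by (subst (asm) sum_nonneg_eq_0_iff) (auto simp: S_def)
  have sp: "\<forall>i<3. \<forall>j<4. \<psi>s l i j = \<alpha> * psi0 a0 a1 a2 i j + \<beta> * psi1 b0 b1 b2 i j"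
  proof (intro allI impI)
    fix i j :: nat assume "i < 3" "j < 4"
    hence "w (i,j) = 0" using wz unfolding S_def by auto
    thus "\<psi>s l i j = \<alpha> * psi0 a0 a1 a2 i j + \<beta> * psi1 b0 b1 b2 i j"
      unfolding w_def f_def P0_def P1_def by (simp add: algebra_simps)
  qed
  have un: "unit_state 3 4 (\<psi>s l)" using dec l unfolding is_decomp_def by blast
  have "(\<Sum>i<3. \<Sum>j<4. (cmod (\<psi>s l i j))\<^sup>2) = (\<Sum>i<3. \<Sum>j<4. (cmod (\<alpha> * psi0 a0 a1 a2 i j + \<beta> * psi1 b0 b1 b2 i j))\<^sup>2)"
    using sp by simp
  also have "\<dots> = (cmod \<alpha>)\<^sup>2 * (a0\<^sup>2 + a1\<^sup>2 + a2\<^sup>2) + (cmod \<beta>)\<^sup>2 * (b0\<^sup>2 + b1\<^sup>2 + b2\<^sup>2)"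
    unfolding sum3 sum4 psi0_def psi1_def by (simp add: norm_mult power_mult_distrib algebra_simps)
  finally have "(cmod \<alpha>)\<^sup>2 + (cmod \<beta>)\<^sup>2 = 1" using un h unfolding unit_state_def by simp
  with sp show ?thesis by blast
qed



lemma cnj_psi0[simp]: "cnj (psi0 a0 a1 a2 i j) = psi0 a0 a1 a2 i j" unfolding psi0_def by simp
lemma cnj_psi1[simp]: "cnj (psi1 b0 b1 b2 i j) = psi1 b0 b1 b2 i j" unfolding psi1_def by simp

lemma E2_psi0:
  assumes "a0 \<ge> 0" "a1 \<ge> 0" "a2 \<ge> 0" "a0 > a1" "a1 \<ge> a2"
  shows "E2_pure 3 4 (psi0 a0 a1 a2) = 1 - a0\<^sup>2"
proof -
  define t where "t i = (if i = 0 then a0\<^sup>2 else if i = 1 then a1\<^sup>2 else a2\<^sup>2)" for i :: nat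
  have "op_norm 3 (reduced_X 4 (psi0 a0 a1 a2)) = a0\<^sup>2"
  proof (rule op_norm_diag[where t = t])
    show "\<And>i k. i < 3 \<Longrightarrow> k < 3 \<Longrightarrow> reduced_X 4 (psi0 a0 a1 a2) i k = (if i = k then complex_of_real (t i) else 0)"
    proof -
      fix i k :: nat assume "i < 3" "k < 3"
      thus "reduced_X 4 (psi0 a0 a1 a2) i k = (if i = k then complex_of_real (t i) else 0)"
        using lt3[OF \<open>i < 3\<close>] lt3[OF \<open>k < 3\<close>]
        unfolding reduced_X_def psi0_def sum4 t_def
        by (elim disjE; simp add: power2_eq_square)
    qed
    show "\<And>i. i < 3 \<Longrightarrow> 0 \<le> t i \<and> t i \<le> a0\<^sup>2"
      unfolding t_def using assms by (auto intro!: power_mono)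
  qed (auto simp: t_def)
  thus ?thesis unfolding E2_pure_def by simp
qed

lemma E2_psi1:
  assumes "b0 \<ge> 0" "b1 \<ge> 0" "b2 \<ge> 0" "b0 > b1" "b1 \<ge> b2"
  shows "E2_pure 3 4 (psi1 b0 b1 b2) = 1 - b0\<^sup>2"
proof -
  define t where "t i = (if i = 0 then b0\<^sup>2 else if i = 1 then b1\<^sup>2 else b2\<^sup>2)" for i :: nat
  have "op_norm 3 (reduced_X 4 (psi1 b0 b1 b2)) = b0\<^sup>2"
  proof (rule op_norm_diag[where t = t])
    show "\<And>i k. i < 3 \<Longrightarrow> k < 3 \<Longrightarrow> reduced_X 4 (psi1 b0 b1 b2) i k = (if i = k then complex_of_real (t i) else 0)"
    proof -
      fix i k :: nat assume "i < 3" "k < 3"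
      thus "reduced_X 4 (psi1 b0 b1 b2) i k = (if i = k then complex_of_real (t i) else 0)"
        using lt3[OF \<open>i < 3\<close>] lt3[OF \<open>k < 3\<close>]
        unfolding reduced_X_def psi1_def sum4 t_def
        by (elim disjE; simp add: power2_eq_square)
    qed
    show "\<And>i. i < 3 \<Longrightarrow> 0 \<le> t i \<and> t i \<le> b0\<^sup>2"
      unfolding t_def using assms by (auto intro!: power_mono)
  qed (auto simp: t_def)
  thus ?thesis unfolding E2_pure_def by simp
qed

lemma part2:
  assumes "a0 \<ge> 0" "a1 \<ge> 0" "a2 \<ge> 0" "b0 \<ge> 0" "b1 \<ge> 0" "b2 \<ge> 0"
    and "a0\<^sup>2 = b0\<^sup>2" "a0\<^sup>2 \<ge> 1/2"
    and "a0 > a1" "a1 \<ge> a2" "b0 > b1" "b1 \<ge> b2"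
    and "a0\<^sup>2 + a1\<^sup>2 + a2\<^sup>2 = 1" "b0\<^sup>2 + b1\<^sup>2 + b2\<^sup>2 = 1"
  shows "E2_mixed 3 4 (rho_AB 2 (Phi_ex a0 a1 a2 b0 b1 b2)) = 1 - a0\<^sup>2"
proof -
  have b0eq: "b0 = a0" using assms(1,4,7) by (metis power2_eq_iff_nonneg)
  let ?\<rho> = "rho_AB 2 (Phi_ex a0 a1 a2 b0 b1 b2)"
  define ps where "ps = (\<lambda>l::nat. if l = 0 then psi0 a0 a1 a2 else psi1 b0 b1 b2)"
  have u: "\<forall>l<2. 0 \<le> (1/2::real) \<and> unit_state 3 4 (ps l)"
  proof (intro allI impI)
    fix l :: nat assume "l < 2"
    hence "l = 0 \<or> l = 1" by auto
    thus "0 \<le> 1/(2::real) \<and> unit_state 3 4 (ps l)"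
      unfolding unit_state_def ps_def sum3 sum4 psi0_def psi1_def using assms(13,14)
      by (auto simp: power2_eq_square)
  qed
  have r: "?\<rho> (i, j) (i', j') = (\<Sum>l<2. complex_of_real (1/2) * ps l i j * cnj (ps l i' j'))" for i j i' j'
    unfolding rho_AB_def Phi_ex_def sum2 ps_def by (simp add: sqrt2c field_simps)
  have D0: "is_decomp 3 4 ?\<rho> 2 (\<lambda>_. 1/2) ps"
    unfolding is_decomp_def using u r by simp
  have v0: "(\<Sum>l<2. 1/2 * E2_pure 3 4 (ps l)) = 1 - a0\<^sup>2"
    unfolding sum2 ps_def using E2_psi0[OF assms(1,2,3,9,10)] E2_psi1[OF assms(4,5,6,11,12)] assms(7) by simp
  have mem: "1 - a0\<^sup>2 \<in> {(\<Sum>l<k. p l * E2_pure 3 4 (psis l)) | k p psis. is_decomp 3 4 ?\<rho> k p psis}"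
    using D0 v0 by force
  have low: "1 - a0\<^sup>2 \<le> x" if xin: "x \<in> {(\<Sum>l<k. p l * E2_pure 3 4 (psis l)) | k p psis. is_decomp 3 4 ?\<rho> k p psis}" for x
  proof -
    obtain k p psis where x: "x = (\<Sum>l<k. p l * E2_pure 3 4 (psis l))" and dec: "is_decomp 3 4 ?\<rho> k p psis"
      using xin by blast
    have pnn: "\<And>l. l < k \<Longrightarrow> p l \<ge> 0" and ps1: "(\<Sum>l<k. p l) = 1" using dec unfolding is_decomp_def by blast+
    have "p l * (1 - a0\<^sup>2) \<le> p l * E2_pure 3 4 (psis l)" if l: "l < k" for l
    proof (cases "p l = 0")
      case True thus ?thesis by simp
    next
      case False
      hence pl: "p l > 0" using pnn[OF l] by simp
      obtain \<alpha> \<beta> where sp: "\<forall>i<3. \<forall>j<4. psis l i j = \<alpha> * psi0 a0 a1 a2 i j + \<beta> * psi1 b0 b1 b2 i j"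
        and ab: "(cmod \<alpha>)\<^sup>2 + (cmod \<beta>)\<^sup>2 = 1"
        using part2_span[OF dec l pl b0eq assms(13,14)] by blast
      have "E2_pure 3 4 (psis l) \<ge> 1 - a0\<^sup>2"
        by (rule part2_pure[OF _ b0eq ab assms(7,8,13,14)]) (use sp in blast)
      thus ?thesis using pl by (simp add: mult_left_mono)
    qed
    hence "(\<Sum>l<k. p l * (1 - a0\<^sup>2)) \<le> x" unfolding x by (intro sum_mono) auto
    thus ?thesis using ps1 by (simp add: sum_distrib_right[symmetric])
  qed
  show ?thesis unfolding E2_mixed_def
    by (rule cInf_eq_minimum[OF mem low]) 
qed



definition xr :: "real \<Rightarrow> real \<Rightarrow> real \<Rightarrow> real \<Rightarrow> nat \<times> nat \<Rightarrow> complex" where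
  "xr Y1 Z1 Y2 Z2 = (\<lambda>(a,c). complex_of_real (if a = 1 \<and> c = 0 then Y1 else if a = 2 \<and> c = 1 then Z1
      else if a = 2 \<and> c = 0 then Y2 else if a = 1 \<and> c = 1 then Z2 else 0))"


lemma Ql_eq:
  fixes \<psi> :: "nat \<Rightarrow> nat \<Rightarrow> complex" and Y1 Z1 Y2 Z2 :: real
  defines "A00 \<equiv> of_real Y1 * \<psi> 1 0 + of_real Y2 * \<psi> 2 0"
    and "A01 \<equiv> of_real Y1 * \<psi> 1 1 + of_real Y2 * \<psi> 2 1"
    and "A10 \<equiv> of_real Z2 * \<psi> 1 0 + of_real Z1 * \<psi> 2 0"
    and "A11 \<equiv> of_real Z2 * \<psi> 1 1 + of_real Z1 * \<psi> 2 1"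
  shows "(\<Sum>u\<in>{..<3}\<times>{..<2}. \<Sum>v\<in>{..<3}\<times>{..<2}. cnj (xr Y1 Z1 Y2 Z2 u) * (\<psi> (fst u) (snd v) * cnj (\<psi> (fst v) (snd u))) * xr Y1 Z1 Y2 Z2 v)
    = A00 * cnj A00 + A11 * cnj A11 + A01 * cnj A10 + A10 * cnj A01"
  unfolding sumS sum3 sum2 xr_def A00_def A01_def A10_def A11_def
  by (simp add: algebra_simps)

lemma part4_q:
  shows "(\<Sum>u\<in>{..<3}\<times>{..<2}. \<Sum>v\<in>{..<3}\<times>{..<2}. cnj (xr Y1 Z1 Y2 Z2 u) * partial_transpose (rho_AC 4 (Phi_ex a0 a1 a2 b0 b1 b2)) u v * xr Y1 Z1 Y2 Z2 v)
    = complex_of_real ((a1\<^sup>2*Y1\<^sup>2 + 2*a2*b1*Y1*Z1 + b2\<^sup>2*Z1\<^sup>2 + a2\<^sup>2*Y2\<^sup>2 + 2*a1*b2*Y2*Z2 + b1\<^sup>2*Z2\<^sup>2)/2)"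
  unfolding sumS sum3 sum2 sum4 xr_def partial_transpose_def rho_AC_def Phi_ex_def psi0_def psi1_def
  by (simp add: sqrt2c field_simps power2_eq_square)



lemma Q_decomp:
  fixes x :: "nat \<times> nat \<Rightarrow> complex"
  assumes dec: "is_decomp 3 2 \<rho> k p \<psi>s"
  shows "(\<Sum>u\<in>{..<3}\<times>{..<2}. \<Sum>v\<in>{..<3}\<times>{..<2}. cnj (x u) * partial_transpose \<rho> u v * x v)
    = (\<Sum>l<k. complex_of_real (p l) * (\<Sum>u\<in>{..<3}\<times>{..<2}. \<Sum>v\<in>{..<3}\<times>{..<2}. cnj (x u) * (\<psi>s l (fst u) (snd v) * cnj (\<psi>s l (fst v) (snd u))) * x v))"
proof -
  let ?T = "{..<3::nat}\<times>{..<2::nat}"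
  have "(\<Sum>u\<in>?T. \<Sum>v\<in>?T. cnj (x u) * partial_transpose \<rho> u v * x v)
      = (\<Sum>u\<in>?T. \<Sum>v\<in>?T. \<Sum>l<k. complex_of_real (p l) * (cnj (x u) * (\<psi>s l (fst u) (snd v) * cnj (\<psi>s l (fst v) (snd u))) * x v))"
  proof (rule sum.cong[OF refl], rule sum.cong[OF refl])
    fix u v assume uv: "u \<in> ?T" "v \<in> ?T"
    obtain i j i' j' where u: "u = (i,j)" "v = (i',j')" "i < 3" "j < 2" "i' < 3" "j' < 2"
      using uv by force
    have "partial_transpose \<rho> u v = \<rho> (i, j') (i', j)" unfolding u partial_transpose_def by simp
    also have "\<dots> = (\<Sum>l<k. complex_of_real (p l) * \<psi>s l i j' * cnj (\<psi>s l i' j))"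
      using dec u unfolding is_decomp_def by blast
    finally have "partial_transpose \<rho> u v = (\<Sum>l<k. complex_of_real (p l) * \<psi>s l i j' * cnj (\<psi>s l i' j))" .
    thus "cnj (x u) * partial_transpose \<rho> u v * x v = (\<Sum>l<k. complex_of_real (p l) * (cnj (x u) * (\<psi>s l (fst u) (snd v) * cnj (\<psi>s l (fst v) (snd u))) * x v))"
      unfolding u by (simp add: sum_distrib_left sum_distrib_right mult_ac)
  qed
  also have "\<dots> = (\<Sum>u\<in>?T. \<Sum>l<k. \<Sum>v\<in>?T. complex_of_real (p l) * (cnj (x u) * (\<psi>s l (fst u) (snd v) * cnj (\<psi>s l (fst v) (snd u))) * x v))"
    by (rule sum.cong[OF refl], rule sum.swap)
  also have "\<dots> = (\<Sum>l<k. \<Sum>u\<in>?T. \<Sum>v\<in>?T. complex_of_real (p l) * (cnj (x u) * (\<psi>s l (fst u) (snd v) * cnj (\<psi>s l (fst v) (snd u))) * x v))"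
    by (rule sum.swap)
  also have "\<dots> = (\<Sum>l<k. complex_of_real (p l) * (\<Sum>u\<in>?T. \<Sum>v\<in>?T. cnj (x u) * (\<psi>s l (fst u) (snd v) * cnj (\<psi>s l (fst v) (snd u))) * x v))"
    by (simp only: sum_distrib_left)
  finally show ?thesis .
qed

lemma det_bound:
  fixes A00 A01 A10 A11 :: complex
  shows "Re (A00 * cnj A00 + A11 * cnj A11 + A01 * cnj A10 + A10 * cnj A01) \<ge> - 2 * cmod (A00 * A11 - A01 * A10)"
proof -
  have e: "Re (A00 * cnj A00 + A11 * cnj A11 + A01 * cnj A10 + A10 * cnj A01)
     = (cmod A00)\<^sup>2 + (cmod A11)\<^sup>2 + 2 * Re (A01 * cnj A10)"
  proof -
    have "Re (A10 * cnj A01) = Re (A01 * cnj A10)" by (simp add: algebra_simps)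
    moreover have "Re (A00 * cnj A00) = (cmod A00)\<^sup>2" "Re (A11 * cnj A11) = (cmod A11)\<^sup>2"
      by (metis Re_complex_of_real cnorm_sq)+
    ultimately show ?thesis by simp
  qed
  have r: "Re (A01 * cnj A10) \<ge> - (cmod A01 * cmod A10)"
    using abs_Re_le_cmod[of "A01 * cnj A10"] by (simp add: norm_mult)
  have s: "2 * cmod A00 * cmod A11 \<le> (cmod A00)\<^sup>2 + (cmod A11)\<^sup>2"
    using sum_squares_bound[of "cmod A00" "cmod A11"] by simp
  have t: "cmod A01 * cmod A10 \<le> cmod A00 * cmod A11 + cmod (A00 * A11 - A01 * A10)"
  proof -
    have "cmod (A01 * A10) \<le> cmod (A00 * A11) + cmod (A00 * A11 - A01 * A10)"
      by (metis add.commute diff_diff_eq2 norm_triangle_ineq4 add_diff_cancel_left')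
    thus ?thesis by (simp add: norm_mult)
  qed
  show ?thesis using e r s t by linarith
qed

lemma Ql_bound:
  fixes \<psi> :: "nat \<Rightarrow> nat \<Rightarrow> complex" and Y1 Z1 Y2 Z2 :: real
  shows "Re (\<Sum>u\<in>{..<3}\<times>{..<2}. \<Sum>v\<in>{..<3}\<times>{..<2}. cnj (xr Y1 Z1 Y2 Z2 u) * (\<psi> (fst u) (snd v) * cnj (\<psi> (fst v) (snd u))) * xr Y1 Z1 Y2 Z2 v)
     \<ge> - (2 * \<bar>Y1 * Z1 - Y2 * Z2\<bar>) * cmod (\<psi> 1 0 * \<psi> 2 1 - \<psi> 1 1 * \<psi> 2 0)"
proof -
  define A00 where "A00 = of_real Y1 * \<psi> 1 0 + of_real Y2 * \<psi> 2 0"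
  define A01 where "A01 = of_real Y1 * \<psi> 1 1 + of_real Y2 * \<psi> 2 1"
  define A10 where "A10 = of_real Z2 * \<psi> 1 0 + of_real Z1 * \<psi> 2 0"
  define A11 where "A11 = of_real Z2 * \<psi> 1 1 + of_real Z1 * \<psi> 2 1"
  have d: "A00 * A11 - A01 * A10 = complex_of_real (Y1 * Z1 - Y2 * Z2) * (\<psi> 1 0 * \<psi> 2 1 - \<psi> 1 1 * \<psi> 2 0)"
    unfolding A00_def A01_def A10_def A11_def by (simp add: algebra_simps)
  have n: "cmod (A00 * A11 - A01 * A10) = \<bar>Y1 * Z1 - Y2 * Z2\<bar> * cmod (\<psi> 1 0 * \<psi> 2 1 - \<psi> 1 1 * \<psi> 2 0)"
    unfolding d by (simp only: norm_mult norm_of_real)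
  have q: "(\<Sum>u\<in>{..<3}\<times>{..<2}. \<Sum>v\<in>{..<3}\<times>{..<2}. cnj (xr Y1 Z1 Y2 Z2 u) * (\<psi> (fst u) (snd v) * cnj (\<psi> (fst v) (snd u))) * xr Y1 Z1 Y2 Z2 v)
     = A00 * cnj A00 + A11 * cnj A11 + A01 * cnj A10 + A10 * cnj A01"
    unfolding A00_def A01_def A10_def A11_def by (rule Ql_eq)
  show ?thesis unfolding q using det_bound[of A00 A11 A01 A10] n by linarith
qed



lemma decomp_exists:
  fixes v :: "nat \<Rightarrow> nat \<Rightarrow> nat \<Rightarrow> complex" and vn :: "nat \<Rightarrow> real"
  assumes vn: "\<And>b. vn b = (\<Sum>i<m. \<Sum>j<n. (cmod (v b i j))\<^sup>2)"
    and pos: "\<And>b. b < K \<Longrightarrow> vn b > 0" and tot: "(\<Sum>b<K. vn b) = 1"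
    and rho: "\<And>i j i' j'. i < m \<Longrightarrow> j < n \<Longrightarrow> i' < m \<Longrightarrow> j' < n \<Longrightarrow> \<rho> (i,j) (i',j') = (\<Sum>b<K. v b i j * cnj (v b i' j'))"
  shows "is_decomp m n \<rho> K vn (\<lambda>b i j. v b i j / complex_of_real (sqrt (vn b)))"
  unfolding is_decomp_def
proof (intro conjI allI impI)
  fix b assume b: "b < K"
  show "0 \<le> vn b" using pos[OF b] by simp
  have "(\<Sum>i<m. \<Sum>j<n. (cmod (v b i j / complex_of_real (sqrt (vn b))))\<^sup>2) = (\<Sum>i<m. \<Sum>j<n. (cmod (v b i j))\<^sup>2 / vn b)"
    using pos[OF b] by (simp add: norm_divide power_divide)
  also have "\<dots> = (\<Sum>i<m. \<Sum>j<n. (cmod (v b i j))\<^sup>2) / vn b" by (simp add: sum_divide_distrib)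
  also have "\<dots> = vn b / vn b" by (simp only: vn)
  also have "\<dots> = 1" using pos[OF b] by simp
  finally show "unit_state m n (\<lambda>i j. v b i j / complex_of_real (sqrt (vn b)))" unfolding unit_state_def .
next
  show "sum vn {..<K} = 1" by (rule tot)
next
  fix i j i' j' assume h: "i < m" "j < n" "i' < m" "j' < n"
  have "\<rho> (i,j) (i',j') = (\<Sum>b<K. v b i j * cnj (v b i' j'))" by (rule rho[OF h])
  also have "\<dots> = (\<Sum>b<K. complex_of_real (vn b) * (v b i j / complex_of_real (sqrt (vn b))) * cnj (v b i' j' / complex_of_real (sqrt (vn b))))"
  proof (rule sum.cong[OF refl])
    fix b assume "b \<in> {..<K}"
    hence p: "vn b > 0" using pos by simp
    have s: "complex_of_real (sqrt (vn b)) * complex_of_real (sqrt (vn b)) = complex_of_real (vn b)"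
      using p by (metis of_real_mult less_imp_le real_sqrt_mult_self abs_of_nonneg)
    have nz: "complex_of_real (sqrt (vn b)) \<noteq> 0" using p by simp
    show "v b i j * cnj (v b i' j') = complex_of_real (vn b) * (v b i j / complex_of_real (sqrt (vn b))) * cnj (v b i' j' / complex_of_real (sqrt (vn b)))"
      using nz by (simp add: s[symmetric] field_simps)
  qed
  finally show "\<rho> (i,j) (i',j') = (\<Sum>b<K. complex_of_real (vn b) * (v b i j / complex_of_real (sqrt (vn b))) * cnj (v b i' j' / complex_of_real (sqrt (vn b))))" .
qed

lemma cmod_div_sqrt2: "(cmod (complex_of_real r / complex_of_real (sqrt 2)))\<^sup>2 = r\<^sup>2/2"
  by (simp add: norm_divide power_divide)

lemma nonempty_AC:
  assumes "a0 > 0" "a1 > 0" "b1 > 0" "b0 = a0"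
    and "a0\<^sup>2 + a1\<^sup>2 + a2\<^sup>2 = 1" "b0\<^sup>2 + b1\<^sup>2 + b2\<^sup>2 = 1"
  shows "\<exists>k p psis. is_decomp 3 2 (rho_AC 4 (Phi_ex a0 a1 a2 b0 b1 b2)) k p psis"
proof -
  define v where "v b i j = Phi_ex a0 a1 a2 b0 b1 b2 i b j" for b i j
  define vn where "vn b = (\<Sum>i<3. \<Sum>j<2. (cmod (v b i j))\<^sup>2)" for b
  have vv: "vn b = (if b = 0 then a0\<^sup>2/2 else if b = 1 then (a1\<^sup>2 + b2\<^sup>2)/2 else if b = 2 then (a2\<^sup>2 + b1\<^sup>2)/2 else b0\<^sup>2/2)"
    if "b < 4" for b
  proof -
    have "b = 0 \<or> b = 1 \<or> b = 2 \<or> b = 3" using that by auto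
    thus ?thesis unfolding vn_def v_def sum3 sum2 Phi_ex_def psi0_def psi1_def
      by (elim disjE; simp add: cmod_div_sqrt2)
  qed
  have pos: "vn b > 0" if "b < 4" for b
    using vv[OF that] assms by (auto simp: add_pos_nonneg add_nonneg_pos)
  have tot: "(\<Sum>b<4. vn b) = 1" unfolding sum4 using vv assms by (simp add: field_simps)
  have rho: "rho_AC 4 (Phi_ex a0 a1 a2 b0 b1 b2) (i,j) (i',j') = (\<Sum>b<4. v b i j * cnj (v b i' j'))" for i j i' j'
    unfolding rho_AC_def v_def by simp
  show ?thesis using decomp_exists[where vn=vn and m=3 and n=2 and v=v and K=4, OF vn_def pos tot rho] by blast
qed



lemma amgm: fixes C m t :: real assumes "t > 0" shows "C * m \<le> t + C\<^sup>2 * m\<^sup>2 / (4 * t)"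
proof -
  have "0 \<le> (2 * t - C * m)\<^sup>2" by simp
  hence "4 * t * (C * m) \<le> 4 * t * t + C\<^sup>2 * m\<^sup>2" by (simp add: power2_eq_square algebra_simps)
  thus ?thesis using assms by (simp add: field_simps power2_eq_square)
qed

lemma part34:
  assumes "a0 \<ge> 0" "a1 \<ge> 0" "a2 \<ge> 0" "b0 \<ge> 0" "b1 \<ge> 0" "b2 \<ge> 0"
    and "a0\<^sup>2 = b0\<^sup>2" "a0\<^sup>2 \<ge> 1/2"
    and "a0 > a1" "a1 \<ge> a2" "b0 > b1" "b1 \<ge> b2"
    and "a0\<^sup>2 + a1\<^sup>2 + a2\<^sup>2 = 1" "b0\<^sup>2 + b1\<^sup>2 + b2\<^sup>2 = 1"
    and ne: "b1 * a2 \<noteq> a1 * b2"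
  shows "E2_mixed 3 2 (rho_AC 4 (Phi_ex a0 a1 a2 b0 b1 b2)) > 0
       \<and> \<not> psd_bip 3 2 (partial_transpose (rho_AC 4 (Phi_ex a0 a1 a2 b0 b1 b2)))"
proof -
  have b0eq: "b0 = a0" using assms(1,4,7) by (metis power2_eq_iff_nonneg)
  have a0p: "a0 > 0" using assms(1,9,2) by linarith
  have a1p: "a1 > 0"
  proof (rule ccontr)
    assume "\<not> a1 > 0" hence "a1 = 0" "a2 = 0" using assms(2,3,10) by linarith+
    thus False using ne by simp
  qed
  have b1p: "b1 > 0"
  proof (rule ccontr)
    assume "\<not> b1 > 0" hence "b1 = 0" "b2 = 0" using assms(5,6,12) by linarith+
    thus False using ne by simp
  qed
  define D where "D = a1\<^sup>2 * b2\<^sup>2 - a2\<^sup>2 * b1\<^sup>2"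
  have Dnz: "D \<noteq> 0"
  proof
    assume "D = 0"
    hence "(a1 * b2 - a2 * b1) * (a1 * b2 + a2 * b1) = 0" unfolding D_def by (simp add: algebra_simps power2_eq_square)
    moreover have "a1 * b2 - a2 * b1 \<noteq> 0" using ne by (simp add: mult.commute)
    moreover have "a1 * b2 + a2 * b1 \<noteq> 0"
    proof
      assume "a1 * b2 + a2 * b1 = 0"
      moreover have "a1 * b2 \<ge> 0" "a2 * b1 \<ge> 0" using assms by simp_all
      ultimately have "a1 * b2 = 0" "a2 * b1 = 0" by linarith+
      thus False using ne by (metis mult.commute)
    qed
    ultimately show False by simp
  qed
  define Y1 where "Y1 = a2\<^sup>2 * b1^3"
  define Z1 where "Z1 = - (a1\<^sup>2 * a2 * b1\<^sup>2)"
  define Y2 where "Y2 = a1\<^sup>2 * b1\<^sup>2 * b2"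
  define Z2 where "Z2 = - (a1^3 * b2\<^sup>2)"
  define \<eta> where "\<eta> = a1\<^sup>2 * b1\<^sup>2 * D\<^sup>2 / 2"
  have \<eta>p: "\<eta> > 0" unfolding \<eta>_def using a1p b1p Dnz by simp
  let ?\<rho> = "rho_AC 4 (Phi_ex a0 a1 a2 b0 b1 b2)"
  let ?T = "{..<3::nat}\<times>{..<2::nat}"
  define x where "x = xr Y1 Z1 Y2 Z2"
  have q: "(\<Sum>u\<in>?T. \<Sum>v\<in>?T. cnj (x u) * partial_transpose ?\<rho> u v * x v) = complex_of_real (- \<eta>)"
  proof -
    have "(\<Sum>u\<in>?T. \<Sum>v\<in>?T. cnj (x u) * partial_transpose ?\<rho> u v * x v)
      = complex_of_real ((a1\<^sup>2*Y1\<^sup>2 + 2*a2*b1*Y1*Z1 + b2\<^sup>2*Z1\<^sup>2 + a2\<^sup>2*Y2\<^sup>2 + 2*a1*b2*Y2*Z2 + b1\<^sup>2*Z2\<^sup>2)/2)"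
      unfolding x_def by (rule part4_q)
    also have "(a1\<^sup>2*Y1\<^sup>2 + 2*a2*b1*Y1*Z1 + b2\<^sup>2*Z1\<^sup>2 + a2\<^sup>2*Y2\<^sup>2 + 2*a1*b2*Y2*Z2 + b1\<^sup>2*Z2\<^sup>2)/2 = - \<eta>"
      unfolding Y1_def Z1_def Y2_def Z2_def \<eta>_def D_def by algebra
    finally show ?thesis .
  qed
  have P4: "\<not> psd_bip 3 2 (partial_transpose ?\<rho>)"
    unfolding psd_bip_def Let_def
  proof
    assume "\<forall>x. (\<Sum>u\<in>?T. \<Sum>v\<in>?T. cnj (x u) * partial_transpose ?\<rho> u v * x v) \<in> \<real> \<and>
               0 \<le> Re (\<Sum>u\<in>?T. \<Sum>v\<in>?T. cnj (x u) * partial_transpose ?\<rho> u v * x v)"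
    hence "0 \<le> Re (\<Sum>u\<in>?T. \<Sum>v\<in>?T. cnj (x u) * partial_transpose ?\<rho> u v * x v)" by blast
    thus False using q \<eta>p by simp
  qed
  define C where "C = 2 * \<bar>Y1 * Z1 - Y2 * Z2\<bar>"
  have C0: "C \<ge> 0" unfolding C_def by simp
  define \<epsilon> where "\<epsilon> = \<eta>\<^sup>2 / (C\<^sup>2 + 1)"
  have \<epsilon>p: "\<epsilon> > 0" unfolding \<epsilon>_def using \<eta>p by (simp add: add_nonneg_pos)
  have low: "\<epsilon> \<le> s" if sin: "s \<in> {(\<Sum>l<k. p l * E2_pure 3 2 (psis l)) | k p psis. is_decomp 3 2 ?\<rho> k p psis}" for s
  proof -
    obtain k p psis where s: "s = (\<Sum>l<k. p l * E2_pure 3 2 (psis l))" and dec: "is_decomp 3 2 ?\<rho> k p psis"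
      using sin by blast
    have pnn: "\<And>l. l < k \<Longrightarrow> p l \<ge> 0" and ps1: "(\<Sum>l<k. p l) = 1"
      and un: "\<And>l. l < k \<Longrightarrow> unit_state 3 2 (psis l)" using dec unfolding is_decomp_def by blast+
    define Ql where "Ql l = (\<Sum>u\<in>?T. \<Sum>v\<in>?T. cnj (x u) * (psis l (fst u) (snd v) * cnj (psis l (fst v) (snd u))) * x v)" for l
    define m where "m l = cmod (psis l 1 0 * psis l 2 1 - psis l 1 1 * psis l 2 0)" for l
    have E2m: "(m l)\<^sup>2 \<le> E2_pure 3 2 (psis l)" if "l < k" for l unfolding m_def by (rule L32[OF un[OF that]])
    have Qb: "Re (Ql l) \<ge> - C * m l" for l unfolding Ql_def m_def C_def x_def by (rule Ql_bound)
    have "complex_of_real (- \<eta>) = (\<Sum>l<k. complex_of_real (p l) * Ql l)"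
      unfolding q[symmetric] Ql_def by (rule Q_decomp[OF dec])
    hence "Re (complex_of_real (- \<eta>)) = Re (\<Sum>l<k. complex_of_real (p l) * Ql l)" by simp
    hence "- \<eta> = (\<Sum>l<k. p l * Re (Ql l))" by (simp add: Re_sum)
    also have "\<dots> \<ge> (\<Sum>l<k. p l * (- (\<eta>/2) - C\<^sup>2 / (2 * \<eta>) * E2_pure 3 2 (psis l)))"
    proof (rule sum_mono)
      fix l assume "l \<in> {..<k}" hence l: "l < k" by simp
      have "C * m l \<le> \<eta>/2 + C\<^sup>2 * (m l)\<^sup>2 / (4 * (\<eta>/2))" by (rule amgm) (use \<eta>p in simp)
      also have "\<dots> \<le> \<eta>/2 + C\<^sup>2 / (2 * \<eta>) * E2_pure 3 2 (psis l)"
        using E2m[OF l] \<eta>p by (simp add: divide_right_mono mult_left_mono field_simps)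
      finally have "Re (Ql l) \<ge> - (\<eta>/2) - C\<^sup>2 / (2 * \<eta>) * E2_pure 3 2 (psis l)" using Qb[of l] by linarith
      thus "p l * (- (\<eta>/2) - C\<^sup>2 / (2 * \<eta>) * E2_pure 3 2 (psis l)) \<le> p l * Re (Ql l)"
        using pnn[OF l] by (simp add: mult_left_mono)
    qed
    finally have "(\<Sum>l<k. p l * (- (\<eta>/2) - C\<^sup>2 / (2 * \<eta>) * E2_pure 3 2 (psis l))) \<le> - \<eta>" .
    moreover have "(\<Sum>l<k. p l * (- (\<eta>/2) - C\<^sup>2 / (2 * \<eta>) * E2_pure 3 2 (psis l))) = - (\<eta>/2) - C\<^sup>2 / (2 * \<eta>) * s"
    proof -
      have "(\<Sum>l<k. p l * (- (\<eta>/2) - C\<^sup>2 / (2 * \<eta>) * E2_pure 3 2 (psis l)))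
          = (\<Sum>l<k. (- (\<eta>/2)) * p l - C\<^sup>2 / (2 * \<eta>) * (p l * E2_pure 3 2 (psis l)))"
        by (intro sum.cong refl) (simp add: algebra_simps)
      also have "\<dots> = (- (\<eta>/2)) * (\<Sum>l<k. p l) - C\<^sup>2 / (2 * \<eta>) * (\<Sum>l<k. p l * E2_pure 3 2 (psis l))"
        by (simp only: sum_subtractf sum_distrib_left)
      finally show ?thesis unfolding s ps1 by simp
    qed
    ultimately have "C\<^sup>2 / (2 * \<eta>) * s \<ge> \<eta>/2" by linarith
    hence cs: "C\<^sup>2 * s \<ge> \<eta>\<^sup>2" using \<eta>p by (simp add: field_simps power2_eq_square)
    have s0: "s \<ge> 0" unfolding s
    proof (rule sum_nonneg)
      fix l assume "l \<in> {..<k}" hence l: "l < k" by simp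
      have "E2_pure 3 2 (psis l) \<ge> 0" using E2m[OF l] by (smt (verit) zero_le_power2)
      thus "p l * E2_pure 3 2 (psis l) \<ge> 0" using pnn[OF l] by simp
    qed
    have "(C\<^sup>2 + 1) * s \<ge> \<eta>\<^sup>2" using cs s0 by (simp add: algebra_simps)
    thus ?thesis unfolding \<epsilon>_def by (simp add: divide_le_eq add_nonneg_pos mult.commute)
  qed
  have nemp: "{(\<Sum>l<k. p l * E2_pure 3 2 (psis l)) | k p psis. is_decomp 3 2 ?\<rho> k p psis} \<noteq> {}"
    using nonempty_AC[OF a0p a1p b1p b0eq assms(13,14)] by blast
  have "\<epsilon> \<le> E2_mixed 3 2 ?\<rho>" unfolding E2_mixed_def by (rule cInf_greatest[OF nemp low])
  with \<epsilon>p P4 show ?thesis by simp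
qed


theorem theorem1:
  fixes a0 a1 a2 b0 b1 b2 :: real
  assumes "a0 \<ge> 0" "a1 \<ge> 0" "a2 \<ge> 0" "b0 \<ge> 0" "b1 \<ge> 0" "b2 \<ge> 0"
    and "a0\<^sup>2 = b0\<^sup>2" "a0\<^sup>2 \<ge> 1/2"
    and "a0 > a1" "a1 \<ge> a2" "b0 > b1" "b1 \<ge> b2"
    and "a0\<^sup>2 + a1\<^sup>2 + a2\<^sup>2 = 1" "b0\<^sup>2 + b1\<^sup>2 + b2\<^sup>2 = 1"
    and "b1 * a2 \<noteq> a1 * b2"
  shows "E2_pure 3 8 (A_BC 2 (Phi_ex a0 a1 a2 b0 b1 b2)) = 1 - a0\<^sup>2
       \<and> E2_mixed 3 4 (rho_AB 2 (Phi_ex a0 a1 a2 b0 b1 b2)) = 1 - a0\<^sup>2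
       \<and> E2_mixed 3 2 (rho_AC 4 (Phi_ex a0 a1 a2 b0 b1 b2)) > 0
       \<and> \<not> psd_bip 3 2 (partial_transpose (rho_AC 4 (Phi_ex a0 a1 a2 b0 b1 b2)))"
  using part1[OF assms(7,8,13,14)] part2[OF assms(1-14)] part34[OF assms] by blast

end
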